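(* Let $d\ge1$, $P\subseteq\mathbb R\times[d]$, $k\in[d]$ and $n$ a positive integer. If $n$ sets $\mathcal D=\{C_1,\dots,C_n\}\subseteq\mathcal C_{\equiv}(P)$ $k$-intersect, then there is a subfamily $\mathcal D'\subseteq\mathcal D$ with $|\mathcal D'|\le 2d-k$ such that $f(\bigcap\mathcal D)=f(\bigcap\mathcal D')$.
   Context: $[d]=\{1,\dots,d\}$. A (separated) $d$-interval is a set $I=\bigcup_{i\in[d]}\{(x,i): x\in I^{(i)}\}\subseteq\mathbb R\times[d]$ with each $I^{(i)}\subseteq\mathbb R$ convex (possibly empty); for any set $C\subseteq\mathbb R\times[d]$ write $C^{(i)}=\{x\in\mathbb R:(x,i)\in C\}$ for its $i$-th level, and points $(x,i)$ lie in the $i$-th level. For $P\subseteq\mathbb R\times[d]$, $\mathcal C_{\equiv}(P)=\{I\cap P: I \text{ a } d\text{-interval}\}$. A collection of sets of $\mathcal C_{\equiv}(P)$ $k$-intersects if its intersection contains at least $k$ points of $P$ lying in $k$ distinct levels. Let $\hat{\mathcal C}_{\equiv}(P)$ be the set of all intersections $\bigcap\mathcal C$ of finite $k$-intersecting subfamilies $\mathcal C\subseteq\mathcal C_{\equiv}(P)$, and define $f:\hat{\mathcal C}_{\equiv}(P)\to(\mathbb R\cup\{-\infty,+\infty\})^d$ by $f(\hat C)=(x_1,\dots,x_d)$ with $x_i=\sup\hat C^{(i)}$ if $\hat C^{(i)}\ne\emptyset$ and $x_i=-\infty$ if $\hat C^{(i)}=\emptyset$. *)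

theory Defs
  imports "HOL-Analysis.Analysis"
begin

definition level :: "(real \<times> nat) set \<Rightarrow> nat \<Rightarrow> real set" where
  "level C i = {x. (x, i) \<in> C}"

definition d_interval :: "nat \<Rightarrow> (real \<times> nat) set \<Rightarrow> bool" where
  "d_interval d I \<longleftrightarrow> I \<subseteq> UNIV \<times> {1..d} \<and> (\<forall>i\<in>{1..d}. convex (level I i))"

definition C_equiv :: "nat \<Rightarrow> (real \<times> nat) set \<Rightarrow> (real \<times> nat) set set" where
  "C_equiv d P = {I \<inter> P | I. d_interval d I}"

definition k_intersects :: "nat \<Rightarrow> (real \<times> nat) set \<Rightarrow> (real \<times> nat) set set \<Rightarrow> bool" where
  "k_intersects k P \<C> \<longleftrightarrow>
     (\<exists>S. S \<subseteq> \<Inter>\<C> \<inter> P \<and> finite S \<and> card S = k \<and> inj_on snd S)"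

text \<open>The map f; coordinates indexed by \<open>i \<in> {1..d}\<close> (value \<open>-\<infinity>\<close> outside, irrelevant).\<close>
definition f_sup :: "nat \<Rightarrow> (real \<times> nat) set \<Rightarrow> nat \<Rightarrow> ereal" where
  "f_sup d C = (\<lambda>i. if i \<in> {1..d} \<and> level C i \<noteq> {} then Sup (ereal ` level C i) else -\<infinity>)"

end

theory Submission
  imports Defs
begin

definition upc :: "real set \<Rightarrow> real set" where "upc K = {y. \<exists>z\<in>K. z \<le> y}"
definition dnc :: "real set \<Rightarrow> real set" where "dnc K = {y. \<exists>z\<in>K. y \<le> z}"

lemma sub_upc: "x \<in> K \<Longrightarrow> x \<in> upc K" unfolding upc_def by auto
lemma sub_dnc: "x \<in> K \<Longrightarrow> x \<in> dnc K" unfolding dnc_def by auto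

lemma convex_updn: assumes "convex (K::real set)" shows "K = upc K \<inter> dnc K"
proof
  show "K \<subseteq> upc K \<inter> dnc K" using sub_upc sub_dnc by blast
  show "upc K \<inter> dnc K \<subseteq> K"
  proof
    fix y assume "y \<in> upc K \<inter> dnc K"
    then obtain a b where ab: "a \<in> K" "a \<le> y" "b \<in> K" "y \<le> b" unfolding upc_def dnc_def by blast
    have "is_interval K" using assms is_interval_convex_1 by blast
    then show "y \<in> K" using ab unfolding is_interval_1 by blast
  qed
qed

lemma upc_total: "upc A \<subseteq> upc B \<or> upc B \<subseteq> upc A"
proof (rule ccontr)
  assume "\<not> ?thesis"
  then obtain x y where x: "x \<in> upc A" "x \<notin> upc B" and y: "y \<in> upc B" "y \<notin> upc A" by auto
  show False
  proof (cases "x \<le> y")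
    case True
    obtain z where "z \<in> A" "z \<le> x" using x(1) unfolding upc_def by blast
    then have "z \<le> y" using True by linarith
    then have "y \<in> upc A" using \<open>z \<in> A\<close> unfolding upc_def by blast
    then show False using y by auto
  next
    case False
    then have "y \<le> x" by simp
    obtain z where "z \<in> B" "z \<le> y" using y(1) unfolding upc_def by blast
    then have "z \<le> x" using \<open>y \<le> x\<close> by linarith
    then have "x \<in> upc B" using \<open>z \<in> B\<close> unfolding upc_def by blast
    then show False using x by auto
  qed
qed

lemma dnc_total: "dnc A \<subseteq> dnc B \<or> dnc B \<subseteq> dnc A"
proof (rule ccontr)
  assume "\<not> ?thesis"
  then obtain x y where x: "x \<in> dnc A" "x \<notin> dnc B" and y: "y \<in> dnc B" "y \<notin> dnc A" by auto
  show False
  proof (cases "x \<le> y")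
    case True
    obtain z where "z \<in> B" "y \<le> z" using y(1) unfolding dnc_def by blast
    then have "x \<le> z" using True by linarith
    then have "x \<in> dnc B" using \<open>z \<in> B\<close> unfolding dnc_def by blast
    then show False using x by auto
  next
    case False
    then have "y \<le> x" by simp
    obtain z where "z \<in> A" "x \<le> z" using x(1) unfolding dnc_def by blast
    then have "y \<le> z" using \<open>y \<le> x\<close> by linarith
    then have "y \<in> dnc A" using \<open>z \<in> A\<close> unfolding dnc_def by blast
    then show False using y by auto
  qed
qed

lemma min_total:
  assumes "finite J" "J \<noteq> {}" "\<forall>i\<in>J. \<forall>j\<in>J. A i \<subseteq> A j \<or> A j \<subseteq> A i"
  shows "\<exists>a\<in>J. \<forall>j\<in>J. A a \<subseteq> A j"
  using assms
proof (induction J rule: finite_ne_induct)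
  case (singleton x) then show ?case by auto
next
  case (insert x F)
  then obtain a where a: "a \<in> F" "\<forall>j\<in>F. A a \<subseteq> A j" by auto
  show ?case
  proof (cases "A a \<subseteq> A x")
    case True then show ?thesis using a by auto
  next
    case False
    then have "A x \<subseteq> A a" using insert.prems a by auto
    then show ?thesis using a by force
  qed
qed

theorem lemma5:
  fixes d k n :: nat and P :: "(real \<times> nat) set" and C :: "nat \<Rightarrow> (real \<times> nat) set"
  assumes "d \<ge> 1"
    and "P \<subseteq> UNIV \<times> {1..d}"
    and "k \<in> {1..d}"
    and "n \<ge> 1"
    and "\<forall>j\<in>{1..n}. C j \<in> C_equiv d P"
    and "k_intersects k P (C ` {1..n})"
  shows "\<exists>D'. D' \<subseteq> C ` {1..n} \<and> D' \<noteq> {} \<and> card D' \<le> 2 * d - k \<and>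
             f_sup d (\<Inter>(C ` {1..n})) = f_sup d (\<Inter>D')"
proof -
  have "\<forall>j\<in>{1..n}. \<exists>I. d_interval d I \<and> C j = I \<inter> P"
    using assms(5) unfolding C_equiv_def by blast
  then obtain I where I: "\<And>j. j\<in>{1..n} \<Longrightarrow> d_interval d (I j) \<and> C j = I j \<inter> P"
    by metis
  have conv: "\<And>i j. i \<in> {1..d} \<Longrightarrow> j \<in> {1..n} \<Longrightarrow>
      level (I j) i = upc (level (I j) i) \<inter> dnc (level (I j) i)"
  proof -
    fix i j assume "i \<in> {1..d}" "j \<in> {1..n}"
    then have "convex (level (I j) i)" using I unfolding d_interval_def by blast
    then show "level (I j) i = upc (level (I j) i) \<inter> dnc (level (I j) i)" by (rule convex_updn)
  qed
  have "\<forall>i\<in>{1..d}. \<exists>a\<in>{1..n}. \<forall>j\<in>{1..n}. upc (level (I a) i) \<subseteq> upc (level (I j) i)"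
    proof
    fix i
    show "\<exists>a\<in>{1..n}. \<forall>j\<in>{1..n}. upc (level (I a) i) \<subseteq> upc (level (I j) i)"
      using min_total[of "{1..n}" "\<lambda>j. upc (level (I j) i)"] upc_total assms(4) by auto
  qed
  then obtain a where a: "\<And>i. i\<in>{1..d} \<Longrightarrow> a i \<in> {1..n} \<and>
      (\<forall>j\<in>{1..n}. upc (level (I (a i)) i) \<subseteq> upc (level (I j) i))"
    by metis
  have "\<forall>i\<in>{1..d}. \<exists>b\<in>{1..n}. \<forall>j\<in>{1..n}. dnc (level (I b) i) \<subseteq> dnc (level (I j) i)"
    proof
    fix i
    show "\<exists>a\<in>{1..n}. \<forall>j\<in>{1..n}. dnc (level (I a) i) \<subseteq> dnc (level (I j) i)"
      using min_total[of "{1..n}" "\<lambda>j. dnc (level (I j) i)"] dnc_total assms(4) by auto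
  qed
  then obtain b where b: "\<And>i. i\<in>{1..d} \<Longrightarrow> b i \<in> {1..n} \<and>
      (\<forall>j\<in>{1..n}. dnc (level (I (b i)) i) \<subseteq> dnc (level (I j) i))"
    by metis
  define X where "X = \<Inter>(C ` {1..n})"
  define N where "N = {i\<in>{1..d}. level X i \<noteq> {}}"
  define E where "E = {1..d} - N"
  define T where "T = a ` E \<union> b ` {1..d}"
  define X' where "X' = \<Inter>(C ` T)"
  have T_sub: "T \<subseteq> {1..n}" unfolding T_def E_def using a b by auto
  have T_ne: "T \<noteq> {}" unfolding T_def using assms(1) by auto
  have XX': "X \<subseteq> X'" unfolding X_def X'_def using T_sub by auto
  have lev: "\<And>x i. x \<in> level X i \<longleftrightarrow> (\<forall>j\<in>{1..n}. (x, i) \<in> I j \<and> (x,i) \<in> P)"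
    unfolding X_def level_def using I by auto
  have levI: "\<And>x i j. x \<in> level (I j) i \<longleftrightarrow> (x, i) \<in> I j" unfolding level_def by auto
  have conv2: "\<And>i j x. i \<in> {1..d} \<Longrightarrow> j \<in> {1..n} \<Longrightarrow>
      x \<in> upc (level (I j) i) \<Longrightarrow> x \<in> dnc (level (I j) i) \<Longrightarrow> (x, i) \<in> I j"
  proof -
    fix i j x assume h: "i \<in> {1..d}" "j \<in> {1..n}" "x \<in> upc (level (I j) i)" "x \<in> dnc (level (I j) i)"
    then have "x \<in> level (I j) i" using conv[OF h(1,2)] by blast
    then show "(x, i) \<in> I j" unfolding level_def by auto
  qed
  have levX': "\<And>x i j. x \<in> level X' i \<Longrightarrow> j \<in> T \<Longrightarrow> (x, i) \<in> I j \<and> (x,i) \<in> P"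
  proof -
    fix x i j assume "x \<in> level X' i" "j \<in> T"
    then have "(x,i) \<in> C j" unfolding X'_def level_def by auto
    moreover have "j \<in> {1..n}" using T_sub \<open>j \<in> T\<close> by auto
    ultimately show "(x, i) \<in> I j \<and> (x,i) \<in> P" using I by blast
  qed
  have main: "f_sup d X i = f_sup d X' i" for i
  proof (cases "i \<in> {1..d}")
    case False then show ?thesis unfolding f_sup_def by auto
  next
    case i: True
    show ?thesis
    proof (cases "i \<in> N")
      case False
      then have e: "level X i = {}" using i N_def by auto
      have "level X' i = {}"
      proof (rule ccontr)
        assume "level X' i \<noteq> {}"
        then obtain x where x: "x \<in> level X' i" by auto
        have "a i \<in> T" "b i \<in> T" using False i unfolding T_def E_def by auto
        then have xa: "x \<in> level (I (a i)) i" and xb: "x \<in> level (I (b i)) i" and xP: "(x,i) \<in> P"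
          using levX'[OF x] levI by auto
        have "x \<in> level X i"
        proof -
          { fix j assume j: "j \<in> {1..n}"
            have "x \<in> upc (level (I (a i)) i)" using xa by (rule sub_upc)
            then have 1: "x \<in> upc (level (I j) i)" using a[OF i] j by auto
            have "x \<in> dnc (level (I (b i)) i)" using xb by (rule sub_dnc)
            then have 2: "x \<in> dnc (level (I j) i)" using b[OF i] j by auto
            have "(x, i) \<in> I j" using conv2[OF i j 1 2] . }
          then show ?thesis using lev xP by auto
        qed
        then show False using e by auto
      qed
      then show ?thesis using e unfolding f_sup_def by simp
    next
      case True
      then obtain p where p: "p \<in> level X i" unfolding N_def by auto
      have p': "p \<in> level X' i" using p XX' unfolding level_def by auto
      have bT: "b i \<in> T" using i unfolding T_def by auto
      have "Sup (ereal ` level X' i) \<le> Sup (ereal ` level X i)"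
      proof (rule Sup_least)
        fix z assume "z \<in> ereal ` level X' i"
        then obtain y where y: "y \<in> level X' i" and z: "z = ereal y" by auto
        show "z \<le> Sup (ereal ` level X i)"
        proof (cases "y \<le> p")
          case True
          then have "z \<le> ereal p" using z by auto
          also have "\<dots> \<le> Sup (ereal ` level X i)" using p by (simp add: Sup_upper)
          finally show ?thesis .
        next
          case False
          have yb: "y \<in> level (I (b i)) i" and yP: "(y,i) \<in> P" using levX'[OF y bT] levI by auto
          have "y \<in> level X i"
          proof -
            { fix j assume j: "j \<in> {1..n}"
              have "y \<in> dnc (level (I (b i)) i)" using yb by (rule sub_dnc)
              then have 2: "y \<in> dnc (level (I j) i)" using b[OF i] j by auto
              have "p \<in> level (I j) i" using p lev levI j by auto
              moreover have "p \<le> y" using False by linarith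
              ultimately have 1: "y \<in> upc (level (I j) i)" unfolding upc_def by blast
              have "(y, i) \<in> I j" using conv2[OF i j 1 2] . }
            then show ?thesis using lev yP by auto
          qed
          then show ?thesis using z by (simp add: Sup_upper)
        qed
      qed
      moreover have "Sup (ereal ` level X i) \<le> Sup (ereal ` level X' i)"
        using XX' unfolding level_def by (intro Sup_subset_mono) auto
      ultimately have "Sup (ereal ` level X i) = Sup (ereal ` level X' i)" by (rule antisym[rotated])
      moreover have "level X i \<noteq> {}" "level X' i \<noteq> {}" using p p' by blast+
      ultimately show ?thesis using i unfolding f_sup_def by simp
    qed
  qed
  have Nsub: "N \<subseteq> {1..d}" unfolding N_def by blast
  have finN: "finite N" using Nsub finite_subset by blast
  obtain S where S: "S \<subseteq> X \<inter> P" "finite S" "card S = k" "inj_on snd S"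
    using assms(6) unfolding k_intersects_def X_def by auto
  have "snd ` S \<subseteq> N"
  proof
    fix i assume "i \<in> snd ` S"
    then obtain x where "(x, i) \<in> S" by auto
    then have "(x,i) \<in> X" "(x,i) \<in> P" using S by auto
    then show "i \<in> N" unfolding N_def level_def using assms(2) by auto
  qed
  then have kN: "k \<le> card N" using S card_inj_on_le[of snd S N] finN by simp
  have cN: "card N \<le> d" using card_mono[OF _ Nsub] by simp
  have cE: "card E = d - card N" unfolding E_def using card_Diff_subset[OF finN Nsub] by simp
  have "card T \<le> card (a ` E) + card (b ` {1..d})" unfolding T_def by (rule card_Un_le)
  also have "\<dots> \<le> card E + d" using card_image_le[of E a] card_image_le[of "{1..d}" b]
    unfolding E_def by simp
  finally have cT: "card T \<le> 2 * d - k" using cN cE kN by linarith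
  show ?thesis
  proof (intro exI conjI)
    show "C ` T \<subseteq> C ` {1..n}" using T_sub by auto
    show "C ` T \<noteq> {}" using T_ne by auto
    show "card (C ` T) \<le> 2 * d - k" using cT card_image_le[of T C] T_sub
      by (meson finite_atLeastAtMost finite_subset le_trans)
    show "f_sup d (\<Inter>(C ` {1..n})) = f_sup d (\<Inter>(C ` T))"
    proof -
      have "f_sup d X = f_sup d X'" using main by (rule ext)
      then show ?thesis unfolding X_def X'_def .
    qed
  qed
qed

end
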